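(* Let $f, g:\mathbb{D}\to\mathbb{C}$ be analytic functions on the open unit disc $\mathbb{D}$, and let $L_1, L_2$ be two $C^1$ curves in $\mathbb{D}$ intersecting at an angle $\theta\in(0,\pi/2]\setminus\pi\mathbb{Q}$, such that $|f(z)|=|g(z)|$ for all $z\in L_1\cup L_2$. Then $f=\beta g$ for some constant $\beta\in\mathbb{T}$.
   Context: $\mathbb{D}=\{z\in\mathbb{C}:|z|<1\}$ and $\mathbb{T}=\{z\in\mathbb{C}:|z|=1\}$. $\pi\mathbb{Q}$ denotes the set of rational multiples of $\pi$. *)

theory Defs
  imports "HOL-Analysis.Analysis"
begin

definition C1_curve_in_disc :: "(real \<Rightarrow> complex) \<Rightarrow> bool" where
  "C1_curve_in_disc \<gamma> \<longleftrightarrow> \<gamma> C1_differentiable_on {0..1} \<and> path_image \<gamma> \<subseteq> ball 0 1"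

text \<open>Angle in [0, pi/2] between the (unoriented) lines spanned by nonzero complex
  numbers a and b.\<close>
definition line_angle :: "complex \<Rightarrow> complex \<Rightarrow> real" where
  "line_angle a b = arccos (\<bar>Re (a * cnj b)\<bar> / (norm a * norm b))"

definition curves_intersect_at_angle ::
  "(real \<Rightarrow> complex) \<Rightarrow> (real \<Rightarrow> complex) \<Rightarrow> real \<Rightarrow> bool" where
  "curves_intersect_at_angle \<gamma>1 \<gamma>2 \<theta> \<longleftrightarrow>
     (\<exists>s t. s \<in> {0<..<1} \<and> t \<in> {0<..<1} \<and> \<gamma>1 s = \<gamma>2 t \<and>
        vector_derivative \<gamma>1 (at s) \<noteq> 0 \<and> vector_derivative \<gamma>2 (at t) \<noteq> 0 \<and>
        line_angle (vector_derivative \<gamma>1 (at s)) (vector_derivative \<gamma>2 (at t)) = \<theta>)"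

end

theory Submission
  imports Defs "HOL-Complex_Analysis.Complex_Analysis"
begin


lemma cos_eq_rat:
  assumes "cos x = cos y" "y / pi \<in> \<rat>" shows "x / pi \<in> \<rat>"
proof -
  have "0 = cos y - cos x" using assms by simp
  hence "sin ((y + x) / 2) = 0 \<or> sin ((x - y) / 2) = 0"
    unfolding cos_diff_cos by simp
  then obtain i :: int where "(y + x) / 2 = i * pi \<or> (x - y) / 2 = i * pi"
    unfolding sin_zero_iff_int2 by blast
  hence "x / pi = 2 * i - y / pi \<or> x / pi = 2 * i + y / pi"
    by (auto simp: field_simps)
  thus ?thesis using assms(2) by (metis Rats_add Rats_diff Rats_mult Rats_of_int Rats_number_of) 
qed

lemma angle_rat:
  fixes w :: complex assumes "w \<noteq> 0" "Im (w^m) = 0" "m > 0"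
  shows "arccos (\<bar>Re w\<bar> / norm w) / pi \<in> \<rat>"
proof -
  define \<phi> where "\<phi> = Arg w"
  have "w ^ m = rcis (norm w ^ m) (real m * \<phi>)"
    unfolding \<phi>_def by (metis DeMoivre2 rcis_cmod_Arg)
  hence "sin (real m * \<phi>) = 0" using assms by (metis Im_rcis mult_eq_0_iff norm_eq_zero power_eq_0_iff)
  then obtain i :: int where i: "real m * \<phi> = i * pi" unfolding sin_zero_iff_int2 by blast
  have phq: "\<phi> / pi \<in> \<rat>"
  proof -
    have "\<phi> / pi = of_int i / of_nat m" using i assms(3) by (auto simp: field_simps)
    thus ?thesis by (metis Rats_divide Rats_of_int Rats_of_nat)
  qed
  have c: "\<bar>Re w\<bar> / norm w = \<bar>cos \<phi>\<bar>" unfolding \<phi>_def using assms(1) cos_Arg by simp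
  have cc: "cos (arccos (\<bar>cos \<phi>\<bar>)) = \<bar>cos \<phi>\<bar>" by (simp add: cos_arccos_abs)
  show ?thesis
  proof (cases "cos \<phi> \<ge> 0")
    case True
    then show ?thesis using c cc cos_eq_rat[OF _ phq] by simp
  next
    case False
    have pq: "(pi - \<phi>) / pi \<in> \<rat>"
    proof -
      have "(pi - \<phi>) / pi = 1 - \<phi> / pi" by (simp add: field_simps)
      thus ?thesis using phq by (metis Rats_1 Rats_diff)
    qed
    moreover have cq: "cos (arccos (\<bar>cos \<phi>\<bar>)) = cos (pi - \<phi>)" using cc False by simp
    have "arccos (\<bar>cos \<phi>\<bar>) / pi \<in> \<rat>" by (rule cos_eq_rat[OF cq pq])
    thus ?thesis using c by simp
  qed
qed


lemma curve_quot:
  fixes L :: "real \<Rightarrow> complex"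
  assumes "(L has_vector_derivative v) (at s)"
  shows "((\<lambda>x. (L x - L s) / complex_of_real (x - s)) \<longlongrightarrow> v) (at s)"
proof -
  have "((\<lambda>y. norm ((L y - L s) - (y - s) *\<^sub>R v) / norm (y - s)) \<longlongrightarrow> 0) (at s)"
    using assms unfolding has_vector_derivative_def has_derivative_iff_norm by blast
  moreover have "\<forall>\<^sub>F y in at s. norm ((L y - L s) - (y - s) *\<^sub>R v) / norm (y - s)
      = norm ((L y - L s) / complex_of_real (y - s) - v)"
  proof (rule eventually_at_topological[THEN iffD2], intro exI[of _ UNIV] conjI ballI impI allI)
    fix y assume "y \<noteq> s"
    hence ne: "complex_of_real (y - s) \<noteq> 0" by simp
    have "(L y - L s) / complex_of_real (y - s) - v = ((L y - L s) - (y - s) *\<^sub>R v) / complex_of_real (y - s)"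
      using ne by (simp add: field_simps scaleR_conv_of_real)
    thus "norm ((L y - L s) - (y - s) *\<^sub>R v) / norm (y - s)
      = norm ((L y - L s) / complex_of_real (y - s) - v)"
      by (simp add: norm_divide del: of_real_diff)
  qed auto
  ultimately have "((\<lambda>y. norm ((L y - L s) / complex_of_real (y - s) - v)) \<longlongrightarrow> 0) (at s)"
    by (rule Lim_transform_eventually)
  hence "((\<lambda>y. (L y - L s) / complex_of_real (y - s) - v) \<longlongrightarrow> 0) (at s)"
    by (rule tendsto_norm_zero_iff[THEN iffD1])
  thus ?thesis by (simp add: LIM_zero_iff)
qed

lemma curve_ne:
  fixes L :: "real \<Rightarrow> complex"
  assumes "(L has_vector_derivative v) (at s)" "v \<noteq> 0"
  shows "\<forall>\<^sub>F x in at s. L x \<noteq> L s"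
proof -
  have "\<forall>\<^sub>F x in at s. (L x - L s) / complex_of_real (x - s) \<noteq> 0"
    using curve_quot[OF assms(1)] assms(2) tendsto_imp_eventually_ne by blast
  thus ?thesis by eventually_elim auto
qed

lemma curve_cont:
  fixes L :: "real \<Rightarrow> complex"
  assumes "(L has_vector_derivative v) (at s)"
  shows "(L \<longlongrightarrow> L s) (at s)"
  using has_vector_derivative_continuous[OF assms] by (simp add: continuous_at)

lemma curve_power_lim:
  fixes L :: "real \<Rightarrow> complex"
  assumes "(L has_vector_derivative v) (at s)" "L s = p"
    and "r > 0" "\<And>z. z \<in> ball p r \<Longrightarrow> H z = (z - p)^m * K z" "continuous_on (ball p r) K"
  shows "((\<lambda>x. H (L x) / complex_of_real (x - s) ^ m) \<longlongrightarrow> v^m * K p) (at s)"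
proof -
  have ev: "\<forall>\<^sub>F x in at s. L x \<in> ball p r"
    using curve_cont[OF assms(1)] assms(2,3) by (metis centre_in_ball open_ball tendsto_def)
  have KL: "((\<lambda>x. K (L x)) \<longlongrightarrow> K p) (at s)"
    using curve_cont[OF assms(1)] assms(2,3,5)
    by (metis centre_in_ball continuous_on_eq_continuous_at isCont_tendsto_compose open_ball)
  have "((\<lambda>x. ((L x - p) / complex_of_real (x - s))^m * K (L x)) \<longlongrightarrow> v^m * K p) (at s)"
    using curve_quot[OF assms(1)] assms(2) KL by (auto intro!: tendsto_intros)
  moreover have "\<forall>\<^sub>F x in at s. ((L x - p) / complex_of_real (x - s))^m * K (L x) = H (L x) / complex_of_real (x - s) ^ m"
    using ev by eventually_elim (simp add: assms(4) power_divide)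
  ultimately show ?thesis by (rule Lim_transform_eventually)
qed


lemma norm_add_sq: "norm (c + e :: complex)^2 = norm c ^2 + 2 * Re (cnj c * e) + norm e ^2"
  unfolding cmod_power2 by (simp add: algebra_simps power2_eq_square)

lemma curve_facts:
  fixes L :: "real \<Rightarrow> complex"
  assumes "(L has_vector_derivative v) (at s)" "v \<noteq> 0" "L s = p" "r > 0"
  shows "\<forall>\<^sub>F x in at s. L x \<in> ball p r \<and> L x \<noteq> p"
proof -
  have "\<forall>\<^sub>F x in at s. L x \<in> ball p r"
    using curve_cont[OF assms(1)] assms(3,4) by (metis centre_in_ball open_ball tendsto_def)
  thus ?thesis using curve_ne[OF assms(1,2), unfolded assms(3)] by eventually_elim auto
qed

lemma curve_comp_lim:
  fixes L :: "real \<Rightarrow> complex"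
  assumes "(L has_vector_derivative v) (at s)" "L s = p" "r > 0" "continuous_on (ball p r) U"
  shows "((\<lambda>x. U (L x)) \<longlongrightarrow> U p) (at s)"
  using curve_cont[OF assms(1)] assms
  by (metis centre_in_ball continuous_on_eq_continuous_at isCont_tendsto_compose open_ball)

lemma lemZ:
  fixes L :: "real \<Rightarrow> complex"
  assumes "(L has_vector_derivative v) (at s)" "v \<noteq> 0" "L s = p" "r > 0"
    "\<And>z. z \<in> ball p r \<Longrightarrow> F z = (z - p)^k * U z" "continuous_on (ball p r) U" "U p \<noteq> 0"
    "\<forall>\<^sub>F x in at s. F (L x) = 0"
  shows False
proof -
  have "\<forall>\<^sub>F x in at s. U (L x) = 0"
    using curve_facts[OF assms(1-4)] assms(8) by eventually_elim (auto simp: assms(5))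
  hence "((\<lambda>x. U (L x)) \<longlongrightarrow> 0) (at s)" by (simp add: tendsto_eventually)
  with curve_comp_lim[OF assms(1,3,4,6)] have "U p = 0"
    using tendsto_unique trivial_limit_at by blast
  with assms(7) show False by simp
qed

lemma lemK:
  fixes L :: "real \<Rightarrow> complex"
  assumes "(L has_vector_derivative v) (at s)" "v \<noteq> 0" "L s = p" "r > 0"
    "\<And>z. z \<in> ball p r \<Longrightarrow> f z = (z - p)^k * u z" "continuous_on (ball p r) u"
    "\<And>z. z \<in> ball p r \<Longrightarrow> g z = (z - p)^l * w z" "continuous_on (ball p r) w" "w p \<noteq> 0"
    "\<forall>\<^sub>F x in at s. norm (f (L x)) = norm (g (L x))"
  shows "k \<le> l"
proof (rule ccontr)
  assume "\<not> k \<le> l"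
  hence kl: "k = l + (k - l)" "k - l > 0" by auto
  have EV: "\<forall>\<^sub>F x in at s. norm (L x - p) ^ (k - l) * norm (u (L x)) = norm (w (L x))"
    using curve_facts[OF assms(1-4)] assms(10)
  proof eventually_elim
    case (elim x)
    hence "norm (L x - p) ^ l * (norm (L x - p) ^ (k - l) * norm (u (L x))) = norm (L x - p) ^ l * norm (w (L x))"
      using assms(5,7) kl(1) by (metis norm_mult norm_power power_add mult.assoc)
    moreover have "norm (L x - p) ^ l \<noteq> 0" using elim by simp
    ultimately show ?case using elim by simp
  qed
  have "((\<lambda>x. L x - p) \<longlongrightarrow> 0) (at s)" using curve_cont[OF assms(1)] assms(3) by (simp add: LIM_zero)
  hence LL: "((\<lambda>x. norm (L x - p) ^ (k - l) * norm (u (L x))) \<longlongrightarrow> norm (0::complex) ^ (k - l) * norm (u p)) (at s)"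
    using curve_comp_lim[OF assms(1,3,4,6)] by (intro tendsto_mult tendsto_power tendsto_norm)
  have z: "norm (0::complex) ^ (k - l) * norm (u p) = 0" using kl(2) by simp
  have "((\<lambda>x. norm (w (L x))) \<longlongrightarrow> 0) (at s)"
    using Lim_transform_eventually[OF LL EV] unfolding z .
  moreover have "((\<lambda>x. norm (w (L x))) \<longlongrightarrow> norm (w p)) (at s)"
    using curve_comp_lim[OF assms(1,3,4,8)] by (rule tendsto_norm)
  ultimately have "norm (w p) = 0" using tendsto_unique trivial_limit_at by blast
  with assms(9) show False by simp
qed

lemma lemR:
  fixes L :: "real \<Rightarrow> complex"
  assumes "(L has_vector_derivative v) (at s)" "v \<noteq> 0" "L s = p" "r > 0" "m > 0" "norm c = 1"
    "\<And>z. z \<in> ball p r \<Longrightarrow> h z - c = (z - p)^m * K z" "continuous_on (ball p r) K"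
    "\<forall>\<^sub>F x in at s. norm (h (L x)) = 1"
  shows "Re (cnj c * (v^m * K p)) = 0"
proof -
  define Q where "Q x = (h (L x) - c) / complex_of_real (x - s) ^ m" for x
  have Ql: "(Q \<longlongrightarrow> v^m * K p) (at s)"
    unfolding Q_def by (rule curve_power_lim[OF assms(1,3,4), of "\<lambda>z. h z - c"]) (use assms(7,8) in auto)
  define G where "G x = 2 * Re (cnj c * Q x) + norm (Q x)^2 * (x - s)^m" for x
  have L0: "(G \<longlongrightarrow> 2 * Re (cnj c * (v^m * K p)) + norm (v^m * K p)^2 * (s - s)^m) (at s)"
    unfolding G_def by (intro tendsto_intros Ql) 
  have eq: "2 * Re (cnj c * (v^m * K p)) + norm (v^m * K p)^2 * (s - s)^m = 2 * Re (cnj c * (v^m * K p))"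
    using assms(5) by simp
  have Gl: "(G \<longlongrightarrow> 2 * Re (cnj c * (v^m * K p))) (at s)" using L0 unfolding eq .
  have "\<forall>\<^sub>F x in at s. G x = 0"
    using assms(9) eventually_neq_at_within[of s s UNIV]
  proof eventually_elim
    case (elim x)
    define t where "t = (x - s)^m"
    have t0: "t \<noteq> 0" using elim by (simp add: t_def)
    have e: "h (L x) = c + complex_of_real t * Q x"
      using t0 by (simp add: Q_def t_def)
    have "1 = norm (h (L x))^2" using elim by simp
    also have "\<dots> = 1 + 2 * Re (cnj c * (complex_of_real t * Q x)) + norm (complex_of_real t * Q x)^2"
      unfolding e norm_add_sq using assms(6) by simp
    also have "\<dots> = 1 + t * (2 * Re (cnj c * Q x) + norm (Q x)^2 * t)"
      by (simp add: algebra_simps power2_eq_square norm_mult)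
    finally have "t * (2 * Re (cnj c * Q x) + norm (Q x)^2 * t) = 0" by simp
    with t0 elim show ?case by (simp add: G_def t_def)
  qed
  hence "(G \<longlongrightarrow> 0) (at s)" by (simp add: tendsto_eventually)
  with Gl have "2 * Re (cnj c * (v^m * K p)) = 0" using tendsto_unique trivial_limit_at by blast
  thus ?thesis by simp
qed


lemma factor_any:
  fixes F :: "complex \<Rightarrow> complex"
  assumes hol: "F holomorphic_on S" and S: "open S" "connected S" and pS: "p \<in> S"
    and nz: "\<exists>z\<in>S. F z \<noteq> 0"
  obtains k r U where "r > 0" "ball p r \<subseteq> S" "U holomorphic_on ball p r"
    "\<And>z. z \<in> ball p r \<Longrightarrow> F z = (z - p)^k * U z" "\<And>z. z \<in> ball p r \<Longrightarrow> U z \<noteq> 0"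
proof (cases "F p = 0")
  case True
  have "\<not> F constant_on S" using True nz pS unfolding constant_on_def by force
  then obtain U r n where "0<n" "0<r" "ball p r \<subseteq> S" "U holomorphic_on ball p r"
     "\<And>w. w \<in> ball p r \<Longrightarrow> F w = (w - p)^n * U w" "\<And>w. w \<in> ball p r \<Longrightarrow> U w \<noteq> 0"
    by (rule holomorphic_factor_zero_nonconstant[OF hol S pS True], blast)
  then show ?thesis using that by blast
next
  case False
  obtain r0 where r0: "r0 > 0" "ball p r0 \<subseteq> S" using S(1) pS openE by blast
  have cF: "continuous (at p) F"
    using hol S(1) pS holomorphic_on_imp_continuous_on continuous_on_eq_continuous_at by blast
  then obtain e where e: "e > 0" "\<And>y. dist p y < e \<Longrightarrow> F y \<noteq> 0"
    using continuous_at_avoid[OF cF False] by blast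
  define r where "r = min r0 e"
  have "r > 0" "ball p r \<subseteq> S" using r0 e by (auto simp: r_def)
  moreover have "F holomorphic_on ball p r" using hol \<open>ball p r \<subseteq> S\<close> holomorphic_on_subset by blast
  moreover have "\<And>z. z \<in> ball p r \<Longrightarrow> F z = (z - p)^0 * F z" by simp
  moreover have "\<And>z. z \<in> ball p r \<Longrightarrow> F z \<noteq> 0" using e by (auto simp: r_def)
  ultimately show ?thesis by (rule that)
qed

lemma zero_transfer:
  fixes F G :: "complex \<Rightarrow> complex" and L :: "real \<Rightarrow> complex"
  assumes hol: "F holomorphic_on ball 0 1" and G0: "\<forall>z\<in>ball 0 1. G z = 0"
    and "(L has_vector_derivative v) (at s)" "v \<noteq> 0" "L s = p" "p \<in> ball 0 1"
    and ev: "\<forall>\<^sub>F x in at s. L x \<in> ball 0 1 \<and> norm (F (L x)) = norm (G (L x))"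
  shows "\<forall>z\<in>ball 0 1. F z = 0"
proof (rule ccontr)
  assume "\<not> (\<forall>z\<in>ball 0 1. F z = 0)"
  hence nz: "\<exists>z\<in>ball 0 1. F z \<noteq> 0" by blast
  obtain k r U where fa: "r > 0" "ball p r \<subseteq> ball 0 1" "U holomorphic_on ball p r"
    "\<And>z. z \<in> ball p r \<Longrightarrow> F z = (z - p)^k * U z" "\<And>z. z \<in> ball p r \<Longrightarrow> U z \<noteq> 0"
    by (rule factor_any[OF hol open_ball connected_ball assms(6) nz], blast)
  have ev0: "\<forall>\<^sub>F x in at s. F (L x) = 0" using ev by eventually_elim (use G0 in auto)
  have Up: "U p \<noteq> 0" using fa(1,5) by simp
  show False
    by (rule lemZ[OF assms(3,4,5) fa(1,4) holomorphic_on_imp_continuous_on[OF fa(3)] Up ev0])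
qed

lemma alg:
  fixes D a b :: complex
  assumes "Re (D * a) = 0" "Re (D * b) = 0" "D \<noteq> 0"
  shows "Im (a * cnj b) = 0"
proof -
  have h1: "Im ((D * a) * cnj (D * b)) = 0" using assms(1,2) by simp
  have eq: "(D * a) * cnj (D * b) = complex_of_real (norm D ^ 2) * (a * cnj b)"
    by (simp add: complex_norm_square mult_ac del: of_real_power)
  have "Im (complex_of_real (norm D ^ 2) * (a * cnj b)) = 0" using h1 unfolding eq .
  hence "norm D ^ 2 * Im (a * cnj b) = 0" by (simp only: times_complex.sel Im_complex_of_real Re_complex_of_real mult_zero_left add_0)
  thus ?thesis using assms(3) by simp
qed


lemma curve_setup:
  fixes L :: "real \<Rightarrow> complex"
  assumes "C1_curve_in_disc L" "s \<in> {0<..<1}"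
  shows "(L has_vector_derivative vector_derivative L (at s)) (at s)"
    and "L s \<in> ball 0 1"
    and "\<forall>\<^sub>F x in at s. L x \<in> path_image L"
proof -
  have "L differentiable at s" using assms unfolding C1_curve_in_disc_def C1_differentiable_on_eq by auto
  thus "(L has_vector_derivative vector_derivative L (at s)) (at s)" using vector_derivative_works by blast
  have "L s \<in> path_image L" unfolding path_image_def using assms(2) by auto
  thus "L s \<in> ball 0 1" using assms(1) unfolding C1_curve_in_disc_def by blast
  have "\<forall>\<^sub>F x in at s. x \<in> {0<..<1}" using assms(2) by (intro eventually_at_in_open') auto
  thus "\<forall>\<^sub>F x in at s. L x \<in> path_image L" by eventually_elim (auto simp: path_image_def)
qed

theorem corollary2p3:
  fixes f g :: "complex \<Rightarrow> complex" and L1 L2 :: "real \<Rightarrow> complex" and \<theta> :: real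
  assumes "f holomorphic_on ball 0 1" and "g holomorphic_on ball 0 1"
    and "C1_curve_in_disc L1" and "C1_curve_in_disc L2"
    and "curves_intersect_at_angle L1 L2 \<theta>"
    and "\<theta> \<in> {0<..pi/2}" and "\<theta> / pi \<notin> \<rat>"
    and "\<forall>z \<in> path_image L1 \<union> path_image L2. norm (f z) = norm (g z)"
  shows "\<exists>\<beta>. norm \<beta> = 1 \<and> (\<forall>z \<in> ball 0 1. f z = \<beta> * g z)"
proof -
  obtain s t where st: "s \<in> {0<..<1}" "t \<in> {0<..<1}" "L1 s = L2 t"
    "vector_derivative L1 (at s) \<noteq> 0" "vector_derivative L2 (at t) \<noteq> 0"
    "line_angle (vector_derivative L1 (at s)) (vector_derivative L2 (at t)) = \<theta>"
    using assms(5) unfolding curves_intersect_at_angle_def by blast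
  define v1 where "v1 = vector_derivative L1 (at s)"
  define v2 where "v2 = vector_derivative L2 (at t)"
  define p where "p = L1 s"
  have d1: "(L1 has_vector_derivative v1) (at s)" and p1: "L1 s = p" and v1: "v1 \<noteq> 0"
    using curve_setup(1)[OF assms(3) st(1)] st(4) by (auto simp: v1_def p_def)
  have d2: "(L2 has_vector_derivative v2) (at t)" and p2: "L2 t = p" and v2: "v2 \<noteq> 0"
    using curve_setup(1)[OF assms(4) st(2)] st(3,5) by (auto simp: v2_def p_def)
  have pB: "p \<in> ball 0 1" using curve_setup(2)[OF assms(3) st(1)] p1 by simp
  have sub1: "path_image L1 \<subseteq> ball 0 1" and sub2: "path_image L2 \<subseteq> ball 0 1"
    using assms(3,4) unfolding C1_curve_in_disc_def by auto
  have E1: "\<forall>\<^sub>F x in at s. L1 x \<in> ball 0 1 \<and> norm (f (L1 x)) = norm (g (L1 x))"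
    using curve_setup(3)[OF assms(3) st(1)] by eventually_elim (use assms(8) sub1 in auto)
  have E2: "\<forall>\<^sub>F x in at t. L2 x \<in> ball 0 1 \<and> norm (f (L2 x)) = norm (g (L2 x))"
    using curve_setup(3)[OF assms(4) st(2)] by eventually_elim (use assms(8) sub2 in auto)
  show ?thesis
  proof (cases "\<forall>z\<in>ball 0 1. g z = 0")
    case True
    have "\<forall>z\<in>ball 0 1. f z = 0" by (rule zero_transfer[OF assms(1) True d1 v1 p1 pB E1])
    thus ?thesis using True by (intro exI[of _ 1]) auto
  next
    case gnz: False
    show ?thesis
    proof (cases "\<forall>z\<in>ball 0 1. f z = 0")
      case True
      have E1': "\<forall>\<^sub>F x in at s. L1 x \<in> ball 0 1 \<and> norm (g (L1 x)) = norm (f (L1 x))"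
        using E1 by eventually_elim auto
      have "\<forall>z\<in>ball 0 1. g z = 0" by (rule zero_transfer[OF assms(2) True d1 v1 p1 pB E1'])
      thus ?thesis using gnz by blast
    next
      case fnz: False
      obtain k r1 u where fa: "r1 > 0" "ball p r1 \<subseteq> ball 0 1" "u holomorphic_on ball p r1"
        "\<And>z. z \<in> ball p r1 \<Longrightarrow> f z = (z - p)^k * u z" "\<And>z. z \<in> ball p r1 \<Longrightarrow> u z \<noteq> 0"
        by (rule factor_any[OF assms(1) open_ball connected_ball pB], use fnz in blast, blast)
      obtain l r2 w where ga: "r2 > 0" "ball p r2 \<subseteq> ball 0 1" "w holomorphic_on ball p r2"
        "\<And>z. z \<in> ball p r2 \<Longrightarrow> g z = (z - p)^l * w z" "\<And>z. z \<in> ball p r2 \<Longrightarrow> w z \<noteq> 0"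
        by (rule factor_any[OF assms(2) open_ball connected_ball pB], use gnz in blast, blast)
      define r where "r = min r1 r2"
      have r: "r > 0" "ball p r \<subseteq> ball 0 1" using fa ga by (auto simp: r_def)
      have rs1: "ball p r \<subseteq> ball p r1" and rs2: "ball p r \<subseteq> ball p r2" by (auto simp: r_def)
      have fr: "\<And>z. z \<in> ball p r \<Longrightarrow> f z = (z - p)^k * u z" using fa(4) rs1 by blast
      have gr: "\<And>z. z \<in> ball p r \<Longrightarrow> g z = (z - p)^l * w z" using ga(4) rs2 by blast
      have uh: "u holomorphic_on ball p r" using fa(3) rs1 holomorphic_on_subset by blast
      have wh: "w holomorphic_on ball p r" using ga(3) rs2 holomorphic_on_subset by blast
      have uc: "continuous_on (ball p r) u" using uh holomorphic_on_imp_continuous_on by blast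
      have wc: "continuous_on (ball p r) w" using wh holomorphic_on_imp_continuous_on by blast
      have unz: "\<And>z. z \<in> ball p r \<Longrightarrow> u z \<noteq> 0" using fa(5) rs1 by blast
      have wnz: "\<And>z. z \<in> ball p r \<Longrightarrow> w z \<noteq> 0" using ga(5) rs2 by blast
      have up: "u p \<noteq> 0" and wp: "w p \<noteq> 0" using unz wnz r(1) by auto
      have F1: "\<forall>\<^sub>F x in at s. norm (f (L1 x)) = norm (g (L1 x))" using E1 by eventually_elim auto
      have F1': "\<forall>\<^sub>F x in at s. norm (g (L1 x)) = norm (f (L1 x))" using E1 by eventually_elim auto
      have "k \<le> l" by (rule lemK[OF d1 v1 p1 r(1) fr uc gr wc wp F1])
      moreover have "l \<le> k" by (rule lemK[OF d1 v1 p1 r(1) gr wc fr uc up F1'])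
      ultimately have kl: "k = l" by simp
      define h where "h z = u z / w z" for z
      have hh: "h holomorphic_on ball p r" unfolding h_def using uh wh wnz by (intro holomorphic_intros) auto
      have hc: "continuous_on (ball p r) h" using hh holomorphic_on_imp_continuous_on by blast
      have H1: "\<forall>\<^sub>F x in at s. norm (h (L1 x)) = 1"
        using curve_facts[OF d1 v1 p1 r(1)] F1
      proof eventually_elim
        case (elim x)
        hence "norm (L1 x - p) ^ k * norm (u (L1 x)) = norm (L1 x - p) ^ k * norm (w (L1 x))"
          using fr gr kl by (metis norm_mult norm_power)
        hence "norm (u (L1 x)) = norm (w (L1 x))" using elim by simp
        thus ?case using wnz elim by (simp add: h_def norm_divide)
      qed
      have F2: "\<forall>\<^sub>F x in at t. norm (f (L2 x)) = norm (g (L2 x))" using E2 by eventually_elim auto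
      have H2: "\<forall>\<^sub>F x in at t. norm (h (L2 x)) = 1"
        using curve_facts[OF d2 v2 p2 r(1)] F2
      proof eventually_elim
        case (elim x)
        hence "norm (L2 x - p) ^ k * norm (u (L2 x)) = norm (L2 x - p) ^ k * norm (w (L2 x))"
          using fr gr kl by (metis norm_mult norm_power)
        hence "norm (u (L2 x)) = norm (w (L2 x))" using elim by simp
        thus ?case using wnz elim by (simp add: h_def norm_divide)
      qed
      define c where "c = h p"
      have "((\<lambda>x. norm (h (L1 x))) \<longlongrightarrow> norm c) (at s)"
        unfolding c_def by (intro tendsto_norm curve_comp_lim[OF d1 p1 r(1) hc])
      moreover have "((\<lambda>x. norm (h (L1 x))) \<longlongrightarrow> 1) (at s)" using H1 by (simp add: tendsto_eventually)
      ultimately have c1: "norm c = 1" using tendsto_unique trivial_limit_at by blast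
      show ?thesis
      proof (cases "\<forall>z\<in>ball p r. h z = c")
        case True
        have "f z = c * g z" if "z \<in> ball p r" for z
          using True that fr gr kl wnz by (auto simp: h_def field_simps)
        moreover have cg: "(\<lambda>z. c * g z) holomorphic_on ball 0 1" using assms(2) by (intro holomorphic_intros)
        moreover have "ball p r \<noteq> {}" using r(1) by simp
        ultimately have "\<forall>z\<in>ball 0 1. f z = c * g z"
          using analytic_continuation_open[of "ball p r" "ball 0 1" f "\<lambda>z. c * g z", OF open_ball open_ball _ connected_ball r(2) assms(1) cg]
          by blast
        thus ?thesis using c1 by blast
      next
        case False
        have hcz: "(\<lambda>z. h z - c) holomorphic_on ball p r" using hh by (intro holomorphic_intros)
        have pr: "p \<in> ball p r" using r by simp
        have nc: "\<not> (\<lambda>z. h z - c) constant_on ball p r"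
        proof
          assume "(\<lambda>z. h z - c) constant_on ball p r"
          then obtain y where y: "\<And>x. x \<in> ball p r \<Longrightarrow> h x - c = y" unfolding constant_on_def by blast
          have "y = 0" using y[OF pr] by (simp add: c_def)
          with y False show False by simp
        qed
        obtain K r' m where ka: "0 < m" "0 < r'" "ball p r' \<subseteq> ball p r" "K holomorphic_on ball p r'"
          "\<And>z. z \<in> ball p r' \<Longrightarrow> h z - c = (z - p)^m * K z" "\<And>z. z \<in> ball p r' \<Longrightarrow> K z \<noteq> 0"
          by (rule holomorphic_factor_zero_nonconstant[OF hcz open_ball connected_ball pr _ nc], simp add: c_def, blast)
        have Kc: "continuous_on (ball p r') K" using ka(4) holomorphic_on_imp_continuous_on by blast
        have R1: "Re (cnj c * (v1^m * K p)) = 0" by (rule lemR[OF d1 v1 p1 ka(2) ka(1) c1 ka(5) Kc H1])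
        have R2: "Re (cnj c * (v2^m * K p)) = 0" by (rule lemR[OF d2 v2 p2 ka(2) ka(1) c1 ka(5) Kc H2])
        have Dnz: "cnj c * K p \<noteq> 0" using c1 ka(2,6) by auto
        have "Im (v1^m * cnj (v2^m)) = 0"
          by (rule alg[OF _ _ Dnz]) (use R1 R2 in \<open>simp_all add: mult_ac\<close>)
        hence Im0: "Im ((v1 * cnj v2)^m) = 0" by (simp add: power_mult_distrib)
        have wnz0: "v1 * cnj v2 \<noteq> 0" using v1 v2 by simp
        have "arccos (\<bar>Re (v1 * cnj v2)\<bar> / norm (v1 * cnj v2)) / pi \<in> \<rat>"
          by (rule angle_rat[OF wnz0 Im0 ka(1)])
        moreover have "\<theta> = arccos (\<bar>Re (v1 * cnj v2)\<bar> / norm (v1 * cnj v2))"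
          using st(6) unfolding line_angle_def v1_def v2_def by (simp add: norm_mult)
        ultimately show ?thesis using assms(7) by simp
      qed
    qed
  qed
qed
end
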